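(* Let $A$ be a noetherian algebra with a dimension function $\partial$, and let $d$ be a positive integer. Suppose $$X:\ 0\to X^0\xrightarrow{f^0}X^1\xrightarrow{f^1}\cdots\to X^d\xrightarrow{f^d}X^{d+1}\to\cdots$$ is a complex of finitely generated right $A$-modules with cohomology $H^i$ such that: (1) $\operatorname{dep}X^i\ge d-i$ for all $i\ge0$; (2) $H^i=0$ for all $i\ge d$; (3) each $H^i$ has $\partial(H^i)\le0$, for all $i\ge0$. Then $X$ is exact.
   Context: A dimension function on right $A$-modules is a function $\partial$ with values in $\mathbb{R}_{\ge0}\cup\{\pm\infty\}$ such that $\partial(M)=-\infty$ iff $M=0$, and $\partial(M)\ge\max\{\partial(N),\partial(M/N)\}$ for every submodule $N\subseteq M$. For a finitely generated right $A$-module $M$, $\operatorname{dep}M=\operatorname{dep}_AM=\inf\{i:\operatorname{Ext}^i_A(S,M)\ne0\text{ for some finitely generated right }A\text{-module }S\text{ with }\partial(S)\le0\}\in\mathbb{N}\cup\{+\infty\}$. *)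

theory Defs
  imports "HOL-Library.Extended_Real"
begin

text \<open>Vectors are finitely supported functions nat => 'a (the free right module of countable rank);
 right scalar action is componentwise right multiplication. Every (countably generated, in
 particular every finitely generated) right A-module is isomorphic to a subquotient N/K with
 K \<subseteq> N submodules of this free module; a module is represented by the pair (N, K).\<close>

type_synonym 'a vec = "nat \<Rightarrow> 'a"
type_synonym 'a sq = "'a vec set \<times> 'a vec set"

definition vzero :: "'a::ring_1 vec" where "vzero = (\<lambda>_. 0)"
definition vadd :: "'a::ring_1 vec \<Rightarrow> 'a vec \<Rightarrow> 'a vec" where "vadd u v = (\<lambda>i. u i + v i)"
definition vsub :: "'a::ring_1 vec \<Rightarrow> 'a vec \<Rightarrow> 'a vec" where "vsub u v = (\<lambda>i. u i - v i)"
definition vsmul :: "'a::ring_1 vec \<Rightarrow> 'a \<Rightarrow> 'a vec" where "vsmul v a = (\<lambda>i. v i * a)"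

definition fvec :: "'a::ring_1 vec set" where "fvec = {v. finite {i. v i \<noteq> 0}}"

definition Fr :: "nat \<Rightarrow> 'a::ring_1 vec set" where "Fr n = {v. \<forall>i\<ge>n. v i = 0}"

definition rsubmod :: "'a::ring_1 vec set \<Rightarrow> bool" where
  "rsubmod N \<longleftrightarrow> N \<subseteq> fvec \<and> vzero \<in> N \<and> (\<forall>u\<in>N. \<forall>v\<in>N. vadd u v \<in> N)
     \<and> (\<forall>v\<in>N. \<forall>a. vsmul v a \<in> N)"

definition lincomb :: "'a::ring_1 vec set \<Rightarrow> ('a vec \<Rightarrow> 'a) \<Rightarrow> 'a vec" where
  "lincomb G c = (\<lambda>i. \<Sum>g\<in>G. g i * c g)"

definition sq_valid :: "'a::ring_1 sq \<Rightarrow> bool" where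
  "sq_valid M \<longleftrightarrow> rsubmod (fst M) \<and> rsubmod (snd M) \<and> snd M \<subseteq> fst M"

definition sq_fg :: "'a::ring_1 sq \<Rightarrow> bool" where
  "sq_fg M \<longleftrightarrow> (\<exists>G. finite G \<and> G \<subseteq> fst M \<and> (\<forall>v\<in>fst M. \<exists>c. vsub v (lincomb G c) \<in> snd M))"

definition sq_zero :: "'a::ring_1 sq \<Rightarrow> bool" where
  "sq_zero M \<longleftrightarrow> fst M = snd M"

text \<open>phi is a set-theoretic lift of an A-module homomorphism N/K -> N'/K'
  (every homomorphism has such a lift, by choosing representatives)\<close>
definition hom_lift :: "'a::ring_1 sq \<Rightarrow> 'a sq \<Rightarrow> ('a vec \<Rightarrow> 'a vec) \<Rightarrow> bool" where
  "hom_lift M M' \<phi> \<longleftrightarrow>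
     (\<forall>v\<in>fst M. \<phi> v \<in> fst M') \<and> (\<forall>v\<in>snd M. \<phi> v \<in> snd M')
   \<and> (\<forall>u\<in>fst M. \<forall>v\<in>fst M. vsub (vsub (\<phi> (vadd u v)) (\<phi> u)) (\<phi> v) \<in> snd M')
   \<and> (\<forall>v\<in>fst M. \<forall>a. vsub (\<phi> (vsmul v a)) (vsmul (\<phi> v) a) \<in> snd M')"

definition sq_iso :: "'a::ring_1 sq \<Rightarrow> 'a sq \<Rightarrow> bool" where
  "sq_iso M M' \<longleftrightarrow> (\<exists>\<phi>. hom_lift M M' \<phi>
     \<and> (\<forall>v\<in>fst M. \<phi> v \<in> snd M' \<longrightarrow> v \<in> snd M)
     \<and> (\<forall>w\<in>fst M'. \<exists>v\<in>fst M. vsub (\<phi> v) w \<in> snd M'))"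

text \<open>Dimension function (values in R_{>=0} \<union> {+-\<infinity>}), on modules up to isomorphism.
  Submodules of N/K are L/K with K \<subseteq> L \<subseteq> N; the corresponding quotient is N/L.\<close>
definition dimfun :: "('a::ring_1 sq \<Rightarrow> ereal) \<Rightarrow> bool" where
  "dimfun D \<longleftrightarrow>
     (\<forall>N K. sq_valid (N, K) \<longrightarrow>
        (D (N, K) = - \<infinity> \<longleftrightarrow> N = K)
      \<and> (D (N, K) \<noteq> - \<infinity> \<longrightarrow> 0 \<le> D (N, K))
      \<and> (\<forall>L. rsubmod L \<and> K \<subseteq> L \<and> L \<subseteq> N \<longrightarrow> max (D (L, K)) (D (N, L)) \<le> D (N, K)))
   \<and> (\<forall>M M'. sq_valid M \<and> sq_valid M' \<and> sq_iso M M' \<longrightarrow> D M = D M')"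

definition mv :: "nat \<Rightarrow> nat \<Rightarrow> (nat \<Rightarrow> nat \<Rightarrow> 'a::ring_1) \<Rightarrow> 'a vec \<Rightarrow> 'a vec" where
  "mv m n E c = (\<lambda>j. if j < m then (\<Sum>k<n. E j k * c k) else 0)"

definition aug :: "nat \<Rightarrow> (nat \<Rightarrow> 'a::ring_1 vec) \<Rightarrow> 'a vec \<Rightarrow> 'a vec" where
  "aug n g c = (\<lambda>i. \<Sum>k<n. g k i * c k)"

text \<open>free resolution  ... -> A^{r 2} --D 1--> A^{r 1} --D 0--> A^{r 0} --aug--> N/K -> 0\<close>
definition free_res :: "'a::ring_1 sq \<Rightarrow> (nat \<Rightarrow> nat) \<Rightarrow> (nat \<Rightarrow> 'a vec) \<Rightarrow> (nat \<Rightarrow> nat \<Rightarrow> nat \<Rightarrow> 'a) \<Rightarrow> bool" where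
  "free_res S r g D \<longleftrightarrow>
     (\<forall>k<r 0. g k \<in> fst S)
   \<and> (\<forall>v\<in>fst S. \<exists>c\<in>Fr (r 0). vsub v (aug (r 0) g c) \<in> snd S)
   \<and> (\<forall>c\<in>Fr (r 0). aug (r 0) g c \<in> snd S \<longleftrightarrow> (\<exists>b\<in>Fr (r 1). c = mv (r 0) (r 1) (D 0) b))
   \<and> (\<forall>i. \<forall>c\<in>Fr (r (Suc i)). mv (r i) (r (Suc i)) (D i) c = vzero \<longleftrightarrow>
          (\<exists>b\<in>Fr (r (Suc (Suc i))). c = mv (r (Suc i)) (r (Suc (Suc i))) (D (Suc i)) b))"

text \<open>Hom_A(A^m, N'/K') = (N'/K')^m; precomposition with an m x n matrix E\<close>
definition codiff :: "nat \<Rightarrow> (nat \<Rightarrow> nat \<Rightarrow> 'a::ring_1) \<Rightarrow> (nat \<Rightarrow> 'a vec) \<Rightarrow> (nat \<Rightarrow> 'a vec)" where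
  "codiff m E \<psi> = (\<lambda>j t. \<Sum>k<m. \<psi> k t * E k j)"

text \<open>Ext^i_A(S, M) \<noteq> 0, computed from a free resolution of S
  (independent of the resolution; such resolutions exist for f.g. S over a noetherian ring)\<close>
definition Ext_nz :: "nat \<Rightarrow> 'a::ring_1 sq \<Rightarrow> 'a sq \<Rightarrow> bool" where
  "Ext_nz i S M \<longleftrightarrow> (\<exists>r g D. free_res S r g D \<and>
     (\<exists>\<phi>. (\<forall>k<r i. \<phi> k \<in> fst M)
        \<and> (\<forall>j<r (Suc i). codiff (r i) (D i) \<phi> j \<in> snd M)
        \<and> \<not> (case i of
               0 \<Rightarrow> (\<forall>k<r 0. \<phi> k \<in> snd M)
             | Suc i' \<Rightarrow> (\<exists>\<psi>. (\<forall>k<r i'. \<psi> k \<in> fst M)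
                  \<and> (\<forall>k<r i. vsub (\<phi> k) (codiff (r i') (D i') \<psi> k) \<in> snd M)))))"

definition dep :: "('a::ring_1 sq \<Rightarrow> ereal) \<Rightarrow> 'a sq \<Rightarrow> enat" where
  "dep D M = (INF i \<in> {i. \<exists>S. sq_valid S \<and> sq_fg S \<and> D S \<le> 0 \<and> Ext_nz i S M}. enat i)"

definition is_complex :: "(nat \<Rightarrow> 'a::ring_1 sq) \<Rightarrow> (nat \<Rightarrow> 'a vec \<Rightarrow> 'a vec) \<Rightarrow> bool" where
  "is_complex X f \<longleftrightarrow> (\<forall>i. sq_valid (X i) \<and> sq_fg (X i) \<and> hom_lift (X i) (X (Suc i)) (f i)
      \<and> (\<forall>v\<in>fst (X i). f (Suc i) (f i v) \<in> snd (X (Suc (Suc i)))))"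

definition cocycles :: "(nat \<Rightarrow> 'a::ring_1 sq) \<Rightarrow> (nat \<Rightarrow> 'a vec \<Rightarrow> 'a vec) \<Rightarrow> nat \<Rightarrow> 'a vec set" where
  "cocycles X f i = {v\<in>fst (X i). f i v \<in> snd (X (Suc i))}"

definition coboundaries :: "(nat \<Rightarrow> 'a::ring_1 sq) \<Rightarrow> (nat \<Rightarrow> 'a vec \<Rightarrow> 'a vec) \<Rightarrow> nat \<Rightarrow> 'a vec set" where
  "coboundaries X f i = (case i of 0 \<Rightarrow> snd (X 0)
      | Suc i' \<Rightarrow> {vadd (f i' u) k | u k. u \<in> fst (X i') \<and> k \<in> snd (X i)})"

definition cohom :: "(nat \<Rightarrow> 'a::ring_1 sq) \<Rightarrow> (nat \<Rightarrow> 'a vec \<Rightarrow> 'a vec) \<Rightarrow> nat \<Rightarrow> 'a sq" where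
  "cohom X f i = (cocycles X f i, coboundaries X f i)"

definition algebra_over :: "('k::field \<Rightarrow> 'a::ring_1) \<Rightarrow> bool" where
  "algebra_over \<iota> \<longleftrightarrow> \<iota> 1 = 1 \<and> (\<forall>x y. \<iota> (x + y) = \<iota> x + \<iota> y) \<and> (\<forall>x y. \<iota> (x * y) = \<iota> x * \<iota> y)
     \<and> (\<forall>x a. \<iota> x * a = a * \<iota> x)"

definition noetherian_ring :: "'a::ring_1 itself \<Rightarrow> bool" where
  "noetherian_ring _ \<longleftrightarrow>
     (\<forall>I::'a set. (0 \<in> I \<and> (\<forall>x\<in>I. \<forall>y\<in>I. x + y \<in> I) \<and> (\<forall>x\<in>I. \<forall>a. x * a \<in> I)) \<longrightarrow>
        (\<exists>G. finite G \<and> G \<subseteq> I \<and> I = {\<Sum>g\<in>G. g * c g | c. True}))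
   \<and> (\<forall>I::'a set. (0 \<in> I \<and> (\<forall>x\<in>I. \<forall>y\<in>I. x + y \<in> I) \<and> (\<forall>x\<in>I. \<forall>a. a * x \<in> I)) \<longrightarrow>
        (\<exists>G. finite G \<and> G \<subseteq> I \<and> I = {\<Sum>g\<in>G. c g * g | c. True}))"

end

theory Submission
  imports Defs
begin


definition eqm :: "'a::ring_1 vec set \<Rightarrow> 'a vec \<Rightarrow> 'a vec \<Rightarrow> bool" where
  "eqm K x y \<longleftrightarrow> vsub x y \<in> K"

definition vs :: "nat \<Rightarrow> (nat \<Rightarrow> 'a::ring_1 vec) \<Rightarrow> (nat \<Rightarrow> 'a) \<Rightarrow> 'a vec" where
  "vs n \<phi> a = (\<lambda>i. \<Sum>k<n. \<phi> k i * a k)"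

lemma sm_zero: "rsubmod K \<Longrightarrow> vzero \<in> K" by (simp add: rsubmod_def)
lemma sm_add: "rsubmod K \<Longrightarrow> u \<in> K \<Longrightarrow> v \<in> K \<Longrightarrow> vadd u v \<in> K" by (simp add: rsubmod_def)
lemma sm_smul: "rsubmod K \<Longrightarrow> v \<in> K \<Longrightarrow> vsmul v a \<in> K" by (simp add: rsubmod_def)
lemma vsub_as: "vsub u v = vadd u (vsmul v (-1))" by (simp add: vsub_def vadd_def vsmul_def)
lemma sm_sub: "rsubmod K \<Longrightarrow> u \<in> K \<Longrightarrow> v \<in> K \<Longrightarrow> vsub u v \<in> K"
  by (simp add: vsub_as sm_add sm_smul)

lemma eqm_refl: "rsubmod K \<Longrightarrow> eqm K x x"
  using sm_zero[of K] by (simp add: eqm_def vsub_def vzero_def)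
lemma eqm_sym: "rsubmod K \<Longrightarrow> eqm K x y \<Longrightarrow> eqm K y x"
proof -
  assume "rsubmod K" "eqm K x y"
  moreover have "vsub y x = vsmul (vsub x y) (-1)" by (simp add: vsub_def vsmul_def fun_eq_iff)
  ultimately show ?thesis by (simp add: eqm_def sm_smul)
qed
lemma eqm_trans: "rsubmod K \<Longrightarrow> eqm K x y \<Longrightarrow> eqm K y z \<Longrightarrow> eqm K x z"
proof -
  assume "rsubmod K" "eqm K x y" "eqm K y z"
  moreover have "vsub x z = vadd (vsub x y) (vsub y z)" by (simp add: vsub_def vadd_def fun_eq_iff)
  ultimately show ?thesis by (simp add: eqm_def sm_add)
qed
lemma eqm_add: "rsubmod K \<Longrightarrow> eqm K x x' \<Longrightarrow> eqm K y y' \<Longrightarrow> eqm K (vadd x y) (vadd x' y')"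
proof -
  assume "rsubmod K" "eqm K x x'" "eqm K y y'"
  moreover have "vsub (vadd x y) (vadd x' y') = vadd (vsub x x') (vsub y y')" by (simp add: vsub_def vadd_def fun_eq_iff)
  ultimately show ?thesis by (simp add: eqm_def sm_add)
qed
lemma eqm_subv: "rsubmod K \<Longrightarrow> eqm K x x' \<Longrightarrow> eqm K y y' \<Longrightarrow> eqm K (vsub x y) (vsub x' y')"
proof -
  assume "rsubmod K" "eqm K x x'" "eqm K y y'"
  moreover have "vsub (vsub x y) (vsub x' y') = vsub (vsub x x') (vsub y y')" by (simp add: vsub_def fun_eq_iff)
  ultimately show ?thesis by (simp add: eqm_def sm_sub)
qed
lemma eqm_smul: "rsubmod K \<Longrightarrow> eqm K x x' \<Longrightarrow> eqm K (vsmul x a) (vsmul x' a)"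
proof -
  assume "rsubmod K" "eqm K x x'"
  moreover have "vsub (vsmul x a) (vsmul x' a) = vsmul (vsub x x') a" by (simp add: vsub_def vsmul_def fun_eq_iff algebra_simps)
  ultimately show ?thesis by (simp add: eqm_def sm_smul)
qed
lemma eqm_in: "rsubmod K \<Longrightarrow> eqm K x y \<Longrightarrow> y \<in> K \<Longrightarrow> x \<in> K"
proof -
  assume "rsubmod K" "eqm K x y" "y \<in> K"
  moreover have "x = vadd (vsub x y) y" by (simp add: vsub_def vadd_def fun_eq_iff)
  ultimately show ?thesis by (metis eqm_def sm_add)
qed
lemma eqm_zero: "eqm K x vzero \<longleftrightarrow> x \<in> K"
proof -
  have "vsub x vzero = x" by (simp add: vsub_def vzero_def fun_eq_iff)
  thus ?thesis by (simp add: eqm_def)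
qed
lemma eqm_mono: "K \<subseteq> K' \<Longrightarrow> eqm K x y \<Longrightarrow> eqm K' x y" by (auto simp: eqm_def)

lemma vs_0[simp]: "vs 0 \<phi> a = vzero" by (simp add: vs_def vzero_def)
lemma vs_Suc: "vs (Suc n) \<phi> a = vadd (vs n \<phi> a) (vsmul (\<phi> n) (a n))"
  by (simp add: vs_def vadd_def vsmul_def fun_eq_iff)
lemma vs_cong: "(\<And>k. k < n \<Longrightarrow> \<phi> k = \<phi>' k) \<Longrightarrow> (\<And>k. k < n \<Longrightarrow> a k = a' k) \<Longrightarrow> vs n \<phi> a = vs n \<phi>' a'"
  by (simp add: vs_def fun_eq_iff)
lemma sm_vs: "rsubmod K \<Longrightarrow> (\<And>k. k < n \<Longrightarrow> \<phi> k \<in> K) \<Longrightarrow> vs n \<phi> a \<in> K"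
  by (induction n) (auto simp: vs_Suc sm_zero sm_add sm_smul)
lemma vs_sub: "vs n (\<lambda>k. vsub (\<phi> k) (\<psi> k)) a = vsub (vs n \<phi> a) (vs n \<psi> a)"
  by (simp add: vs_def vsub_def fun_eq_iff algebra_simps sum_subtractf)
lemma vs_eqm: "rsubmod K \<Longrightarrow> (\<And>k. k < n \<Longrightarrow> eqm K (\<phi> k) (\<psi> k)) \<Longrightarrow> eqm K (vs n \<phi> a) (vs n \<psi> a)"
  unfolding eqm_def vs_sub[symmetric] by (rule sm_vs) auto
lemma vs_vs: "vs m (\<lambda>k. vs n \<phi> (\<lambda>l. E l k)) a = vs n \<phi> (\<lambda>l. \<Sum>k<m. E l k * a k)"
  by (simp add: vs_def fun_eq_iff sum_distrib_left sum_distrib_right mult.assoc sum.swap[of _ "{..<m}"])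
lemma vs_zero_coeff: "(\<And>k. k < n \<Longrightarrow> a k = 0) \<Longrightarrow> vs n \<phi> a = vzero"
  by (simp add: vs_def vzero_def fun_eq_iff)

lemma aug_vs: "aug n g c = vs n g c" by (simp add: aug_def vs_def)
lemma codiff_vs: "codiff m E \<psi> j = vs m \<psi> (\<lambda>k. E k j)" by (simp add: codiff_def vs_def)



lemma valid_fst: "sq_valid M \<Longrightarrow> rsubmod (fst M)" by (simp add: sq_valid_def)
lemma valid_snd: "sq_valid M \<Longrightarrow> rsubmod (snd M)" by (simp add: sq_valid_def)
lemma valid_sub: "sq_valid M \<Longrightarrow> v \<in> snd M \<Longrightarrow> v \<in> fst M" by (auto simp add: sq_valid_def)

lemma hl_fst: "hom_lift M M' \<phi> \<Longrightarrow> v \<in> fst M \<Longrightarrow> \<phi> v \<in> fst M'" by (simp add: hom_lift_def)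
lemma hl_snd: "hom_lift M M' \<phi> \<Longrightarrow> v \<in> snd M \<Longrightarrow> \<phi> v \<in> snd M'" by (simp add: hom_lift_def)
lemma hl_add: "hom_lift M M' \<phi> \<Longrightarrow> u \<in> fst M \<Longrightarrow> v \<in> fst M \<Longrightarrow> eqm (snd M') (\<phi> (vadd u v)) (vadd (\<phi> u) (\<phi> v))"
proof -
  assume a: "hom_lift M M' \<phi>" "u \<in> fst M" "v \<in> fst M"
  have "vsub x (vadd a b) = vsub (vsub x a) b" for x a b :: "'a vec"
    by (simp add: vsub_def vadd_def fun_eq_iff algebra_simps)
  with a show ?thesis by (simp add: hom_lift_def eqm_def)
qed
lemma hl_smul: "hom_lift M M' \<phi> \<Longrightarrow> v \<in> fst M \<Longrightarrow> eqm (snd M') (\<phi> (vsmul v a)) (vsmul (\<phi> v) a)"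
  by (simp add: hom_lift_def eqm_def)

lemma hl_eqm:
  assumes h: "hom_lift M M' \<phi>" and vM: "sq_valid M" and vM': "sq_valid M'"
    and u: "u \<in> fst M" and v: "v \<in> fst M" and uv: "eqm (snd M) u v"
  shows "eqm (snd M') (\<phi> u) (\<phi> v)"
proof -
  have e: "u = vadd (vsub u v) v" by (simp add: vsub_def vadd_def fun_eq_iff)
  have s: "vsub u v \<in> snd M" using uv by (simp add: eqm_def)
  hence s': "vsub u v \<in> fst M" using vM valid_sub by blast
  have "eqm (snd M') (\<phi> u) (vadd (\<phi> (vsub u v)) (\<phi> v))"
    using hl_add[OF h s' v] e by simp
  moreover have "eqm (snd M') (vadd (\<phi> (vsub u v)) (\<phi> v)) (vadd vzero (\<phi> v))"
    apply (rule eqm_add[OF valid_snd[OF vM']])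
    using hl_snd[OF h s] apply (simp add: eqm_zero)
    by (rule eqm_refl[OF valid_snd[OF vM']])
  moreover have "vadd vzero (\<phi> v) = \<phi> v" by (simp add: vadd_def vzero_def)
  ultimately show ?thesis using eqm_trans[OF valid_snd[OF vM']] by metis
qed

lemma hl_vs:
  assumes h: "hom_lift M M' \<phi>" and vM: "sq_valid M" and vM': "sq_valid M'"
  shows "(\<And>k. k < n \<Longrightarrow> \<psi> k \<in> fst M) \<Longrightarrow> eqm (snd M') (\<phi> (vs n \<psi> a)) (vs n (\<lambda>k. \<phi> (\<psi> k)) a)"
proof (induction n)
  case 0
  have "vzero \<in> snd M" by (rule sm_zero[OF valid_snd[OF vM]])
  then show ?case using hl_snd[OF h] by (simp add: eqm_zero)
next
  case (Suc n)
  have K: "rsubmod (snd M')" using vM' valid_snd by blast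
  have F: "rsubmod (fst M)" using vM valid_fst by blast
  have in1: "vs n \<psi> a \<in> fst M" using Suc.prems by (intro sm_vs[OF F]) auto
  have in2: "vsmul (\<psi> n) (a n) \<in> fst M" using Suc.prems by (intro sm_smul[OF F]) auto
  have "eqm (snd M') (\<phi> (vs (Suc n) \<psi> a)) (vadd (\<phi> (vs n \<psi> a)) (\<phi> (vsmul (\<psi> n) (a n))))"
    unfolding vs_Suc by (rule hl_add[OF h in1 in2])
  moreover have "eqm (snd M') (vadd (\<phi> (vs n \<psi> a)) (\<phi> (vsmul (\<psi> n) (a n))))
     (vadd (vs n (\<lambda>k. \<phi> (\<psi> k)) a) (vsmul (\<phi> (\<psi> n)) (a n)))"
    using Suc by (intro eqm_add[OF K] hl_smul[OF h]) auto
  ultimately show ?case unfolding vs_Suc[of n "\<lambda>k. \<phi> (\<psi> k)"] using eqm_trans[OF K] by blast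
qed

lemma ebasis_Fr: "j < n \<Longrightarrow> (\<lambda>k. if k = j then (1::'a::ring_1) else 0) \<in> Fr n"
  by (simp add: Fr_def)

lemma mv_ebasis: "j < n \<Longrightarrow> k < m \<Longrightarrow> mv m n E (\<lambda>k. if k = j then (1::'a::ring_1) else 0) k = E k j"
proof -
  assume a: "j < n" "k < m"
  have "(\<Sum>k'<n. E k k' * (if k' = j then 1 else 0)) = (\<Sum>k'<n. if k' = j then E k k' else 0)"
    by (rule sum.cong) auto
  also have "\<dots> = E k j" using a by (simp add: sum.delta)
  finally show ?thesis using a by (simp add: mv_def)
qed

lemma mv_Fr: "mv m n E c \<in> Fr m" by (simp add: mv_def Fr_def)

lemma fr_exact0: "free_res S r g D \<Longrightarrow> c \<in> Fr (r 0) \<Longrightarrow>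
   aug (r 0) g c \<in> snd S \<longleftrightarrow> (\<exists>b\<in>Fr (r 1). c = mv (r 0) (r 1) (D 0) b)"
  unfolding free_res_def by (elim conjE) (drule bspec, assumption)
lemma fr_exact: "free_res S r g D \<Longrightarrow> c \<in> Fr (r (Suc i)) \<Longrightarrow>
   mv (r i) (r (Suc i)) (D i) c = vzero \<longleftrightarrow> (\<exists>b\<in>Fr (r (Suc (Suc i))). c = mv (r (Suc i)) (r (Suc (Suc i))) (D (Suc i)) b)"
  unfolding free_res_def by (elim conjE) (drule spec, drule bspec, assumption)
lemma fr_gen: "free_res S r g D \<Longrightarrow> k < r 0 \<Longrightarrow> g k \<in> fst S"
  unfolding free_res_def by blast
lemma fr_span: "free_res S r g D \<Longrightarrow> v \<in> fst S \<Longrightarrow> \<exists>c\<in>Fr (r 0). vsub v (aug (r 0) g c) \<in> snd S"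
  unfolding free_res_def by blast

lemma fr1:
  assumes "free_res S r g D" "j < r 1"
  shows "vs (r 0) g (\<lambda>k. D 0 k j) \<in> snd S"
proof -
  let ?e = "\<lambda>k. if k = j then (1::'a) else 0"
  let ?c = "mv (r 0) (r 1) (D 0) ?e"
  have "aug (r 0) g ?c \<in> snd S"
    using fr_exact0[OF assms(1) mv_Fr] ebasis_Fr[OF assms(2)] by blast
  moreover have "aug (r 0) g ?c = vs (r 0) g (\<lambda>k. D 0 k j)"
    unfolding aug_vs by (rule vs_cong) (use mv_ebasis[OF assms(2)] in auto)
  ultimately show ?thesis by simp
qed

lemma fr2:
  assumes "free_res S r g D" "l < r i" "j < r (Suc (Suc i))"
  shows "(\<Sum>k<r (Suc i). D i l k * D (Suc i) k j) = 0"
proof -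
  let ?e = "\<lambda>k. if k = j then (1::'a) else 0"
  let ?c = "mv (r (Suc i)) (r (Suc (Suc i))) (D (Suc i)) ?e"
  have "mv (r i) (r (Suc i)) (D i) ?c = vzero"
    using fr_exact[OF assms(1) mv_Fr] ebasis_Fr[OF assms(3)] by blast
  hence "mv (r i) (r (Suc i)) (D i) ?c l = 0" by (simp add: vzero_def)
  moreover have "mv (r i) (r (Suc i)) (D i) ?c l = (\<Sum>k<r (Suc i). D i l k * ?c k)"
    using assms(2) by (simp add: mv_def[of "r i"])
  moreover have "(\<Sum>k<r (Suc i). D i l k * ?c k) = (\<Sum>k<r (Suc i). D i l k * D (Suc i) k j)"
    by (rule sum.cong) (simp_all add: mv_ebasis[OF assms(3)])
  ultimately show ?thesis by simp
qed



lemma cx_valid: "is_complex X f \<Longrightarrow> sq_valid (X i)" by (simp add: is_complex_def)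
lemma cx_fg: "is_complex X f \<Longrightarrow> sq_fg (X i)" by (simp add: is_complex_def)
lemma cx_hl: "is_complex X f \<Longrightarrow> hom_lift (X i) (X (Suc i)) (f i)" by (simp add: is_complex_def)
lemma cx_comp: "is_complex X f \<Longrightarrow> v \<in> fst (X i) \<Longrightarrow> f (Suc i) (f i v) \<in> snd (X (Suc (Suc i)))"
  by (simp add: is_complex_def)

lemma eqm_in_fst: "sq_valid M \<Longrightarrow> eqm (snd M) x y \<Longrightarrow> y \<in> fst M \<Longrightarrow> x \<in> fst M"
  by (rule eqm_in[OF valid_fst]) (auto intro: eqm_mono simp: sq_valid_def)

lemma rsubmod_fvec: "rsubmod K \<Longrightarrow> K \<subseteq> fvec" by (simp add: rsubmod_def)

lemma cocycles_sm:
  assumes X: "is_complex X f" shows "rsubmod (cocycles X f i)"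
proof -
  have F: "rsubmod (fst (X i))" and K: "rsubmod (snd (X (Suc i)))" and K0: "rsubmod (snd (X i))"
    using cx_valid[OF X] valid_fst valid_snd by blast+
  have h: "hom_lift (X i) (X (Suc i)) (f i)" by (rule cx_hl[OF X])
  have "cocycles X f i \<subseteq> fvec" using rsubmod_fvec[OF F] by (auto simp: cocycles_def)
  moreover have "vzero \<in> cocycles X f i"
    using sm_zero[OF F] hl_snd[OF h sm_zero[OF K0]] by (simp add: cocycles_def)
  moreover have "vadd u v \<in> cocycles X f i" if "u \<in> cocycles X f i" "v \<in> cocycles X f i" for u v
  proof -
    have u: "u \<in> fst (X i)" "f i u \<in> snd (X (Suc i))" and v: "v \<in> fst (X i)" "f i v \<in> snd (X (Suc i))"
      using that by (auto simp: cocycles_def)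
    show ?thesis unfolding cocycles_def
      using hl_add[OF h u(1) v(1)] eqm_in[OF K] sm_add[OF K u(2) v(2)] sm_add[OF F u(1) v(1)] by blast
  qed
  moreover have "vsmul v a \<in> cocycles X f i" if "v \<in> cocycles X f i" for v a
  proof -
    have v: "v \<in> fst (X i)" "f i v \<in> snd (X (Suc i))"
      using that by (auto simp: cocycles_def)
    show ?thesis unfolding cocycles_def
      using hl_smul[OF h v(1)] eqm_in[OF K] sm_smul[OF K v(2)] sm_smul[OF F v(1)] by blast
  qed
  ultimately show ?thesis unfolding rsubmod_def by blast
qed

lemma cob_Suc_iff:
  assumes X: "is_complex X f"
  shows "x \<in> coboundaries X f (Suc i) \<longleftrightarrow> (\<exists>u\<in>fst (X i). eqm (snd (X (Suc i))) x (f i u))"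
proof
  assume "x \<in> coboundaries X f (Suc i)"
  then obtain u k where "u \<in> fst (X i)" "k \<in> snd (X (Suc i))" "x = vadd (f i u) k"
    by (auto simp: coboundaries_def)
  moreover have "vsub (vadd a k) a = k" for a :: "'a vec" by (simp add: vsub_def vadd_def fun_eq_iff)
  ultimately have "u \<in> fst (X i) \<and> eqm (snd (X (Suc i))) x (f i u)" by (simp add: eqm_def)
  then show "\<exists>u\<in>fst (X i). eqm (snd (X (Suc i))) x (f i u)" by blast
next
  assume "\<exists>u\<in>fst (X i). eqm (snd (X (Suc i))) x (f i u)"
  then obtain u where "u \<in> fst (X i)" "vsub x (f i u) \<in> snd (X (Suc i))" by (auto simp: eqm_def)
  moreover have "x = vadd (f i u) (vsub x (f i u))" by (simp add: vsub_def vadd_def fun_eq_iff)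
  ultimately show "x \<in> coboundaries X f (Suc i)" by (auto simp: coboundaries_def)
qed

lemma coboundaries_sm:
  assumes X: "is_complex X f" shows "rsubmod (coboundaries X f i)"
proof (cases i)
  case 0 then show ?thesis using valid_snd[OF cx_valid[OF X, of 0]] by (simp add: coboundaries_def)
next
  case (Suc i')
  have F: "rsubmod (fst (X i'))" and K: "rsubmod (snd (X (Suc i')))" and K0: "rsubmod (snd (X i'))"
    and F1: "rsubmod (fst (X (Suc i')))"
    using cx_valid[OF X] valid_fst valid_snd by blast+
  have h: "hom_lift (X i') (X (Suc i')) (f i')" by (rule cx_hl[OF X])
  note ci = cob_Suc_iff[OF X]
  have "coboundaries X f (Suc i') \<subseteq> fvec"
  proof
    fix x assume "x \<in> coboundaries X f (Suc i')"
    then obtain u where "u \<in> fst (X i')" "eqm (snd (X (Suc i'))) x (f i' u)" using ci by blast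
    then have "x \<in> fst (X (Suc i'))" using eqm_in_fst[OF cx_valid[OF X]] hl_fst[OF h] by blast
    then show "x \<in> fvec" using rsubmod_fvec[OF F1] by blast
  qed
  moreover have "vzero \<in> coboundaries X f (Suc i')"
    unfolding ci using sm_zero[OF F] hl_snd[OF h sm_zero[OF K0]] eqm_sym[OF K] eqm_zero by metis
  moreover have "vadd u v \<in> coboundaries X f (Suc i')"
    if uv: "u \<in> coboundaries X f (Suc i')" "v \<in> coboundaries X f (Suc i')" for u v
  proof -
    obtain a b where ab: "a \<in> fst (X i')" "b \<in> fst (X i')" "eqm (snd (X (Suc i'))) u (f i' a)"
      "eqm (snd (X (Suc i'))) v (f i' b)" using uv ci by meson
    have "eqm (snd (X (Suc i'))) (vadd u v) (vadd (f i' a) (f i' b))" using ab eqm_add[OF K] by blast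
    moreover have "eqm (snd (X (Suc i'))) (vadd (f i' a) (f i' b)) (f i' (vadd a b))"
      using hl_add[OF h ab(1,2)] eqm_sym[OF K] by blast
    ultimately show ?thesis unfolding ci using sm_add[OF F ab(1,2)] eqm_trans[OF K] by blast
  qed
  moreover have "vsmul v c \<in> coboundaries X f (Suc i')"
    if vv: "v \<in> coboundaries X f (Suc i')" for v c
  proof -
    obtain b where ab: "b \<in> fst (X i')" "eqm (snd (X (Suc i'))) v (f i' b)" using vv ci by meson
    have "eqm (snd (X (Suc i'))) (vsmul v c) (vsmul (f i' b) c)" using ab eqm_smul[OF K] by blast
    moreover have "eqm (snd (X (Suc i'))) (vsmul (f i' b) c) (f i' (vsmul b c))"
      using hl_smul[OF h ab(1)] eqm_sym[OF K] by blast
    ultimately show ?thesis unfolding ci using sm_smul[OF F ab(1)] eqm_trans[OF K] by blast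
  qed
  ultimately show ?thesis unfolding rsubmod_def Suc by blast
qed

lemma snd_sub_cob:
  assumes X: "is_complex X f" shows "snd (X i) \<subseteq> coboundaries X f i"
proof (cases i)
  case 0 then show ?thesis by (simp add: coboundaries_def)
next
  case (Suc i')
  have F: "rsubmod (fst (X i'))" and K: "rsubmod (snd (X (Suc i')))" and K0: "rsubmod (snd (X i'))"
    using cx_valid[OF X] valid_fst valid_snd by blast+
  have h: "hom_lift (X i') (X (Suc i')) (f i')" by (rule cx_hl[OF X])
  show ?thesis unfolding Suc
  proof
    fix x assume x: "x \<in> snd (X (Suc i'))"
    have "eqm (snd (X (Suc i'))) x (f i' vzero)"
      unfolding eqm_def by (rule sm_sub[OF K x hl_snd[OF h sm_zero[OF K0]]])
    then show "x \<in> coboundaries X f (Suc i')" unfolding cob_Suc_iff[OF X] using sm_zero[OF F] by blast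
  qed
qed

lemma cob_sub_coc:
  assumes X: "is_complex X f" shows "coboundaries X f i \<subseteq> cocycles X f i"
proof (cases i)
  case 0
  have "snd (X 0) \<subseteq> cocycles X f 0"
    using valid_sub[OF cx_valid[OF X]] hl_snd[OF cx_hl[OF X]] by (auto simp: cocycles_def)
  then show ?thesis using 0 by (simp add: coboundaries_def)
next
  case (Suc i')
  have K: "rsubmod (snd (X (Suc (Suc i'))))"
    using cx_valid[OF X] valid_snd by blast
  show ?thesis unfolding Suc
  proof
    fix x assume "x \<in> coboundaries X f (Suc i')"
    then obtain u where u: "u \<in> fst (X i')" "eqm (snd (X (Suc i'))) x (f i' u)" using cob_Suc_iff[OF X] by blast
    have fu: "f i' u \<in> fst (X (Suc i'))" using hl_fst[OF cx_hl[OF X] u(1)] .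
    have x: "x \<in> fst (X (Suc i'))" using eqm_in_fst[OF cx_valid[OF X] u(2) fu] .
    have "eqm (snd (X (Suc (Suc i')))) (f (Suc i') x) (f (Suc i') (f i' u))"
      using hl_eqm[OF cx_hl[OF X] cx_valid[OF X] cx_valid[OF X] x fu u(2)] .
    then have "f (Suc i') x \<in> snd (X (Suc (Suc i')))" using eqm_in[OF K] cx_comp[OF X u(1)] by blast
    then show "x \<in> cocycles X f (Suc i')" using x by (simp add: cocycles_def)
  qed
qed

lemma cohom_valid: assumes "is_complex X f" shows "sq_valid (cohom X f i)"
  using cocycles_sm[OF assms] cob_sub_coc[OF assms] coboundaries_sm[OF assms] by (simp add: sq_valid_def cohom_def)



lemma Fr_sm: "rsubmod (Fr n :: 'a::ring_1 vec set)"
proof -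
  have "Fr n \<subseteq> (fvec :: 'a vec set)"
  proof
    fix v :: "'a vec" assume "v \<in> Fr n"
    then have "{i. v i \<noteq> 0} \<subseteq> {..<n}" by (auto simp: Fr_def not_less[symmetric])
    then show "v \<in> fvec" by (simp add: fvec_def finite_subset)
  qed
  then show ?thesis by (auto simp: rsubmod_def Fr_def vzero_def vadd_def vsmul_def)
qed

lemma sm_Int: "rsubmod A \<Longrightarrow> rsubmod B \<Longrightarrow> rsubmod (A \<inter> B)"
  by (auto simp: rsubmod_def)

lemma sm_setsum:
  assumes "finite A" "rsubmod K"
  shows "(\<forall>x\<in>A. \<phi> x \<in> K) \<Longrightarrow> (\<lambda>i. \<Sum>x\<in>A. \<phi> x i * c x) \<in> K"
  using assms(1)
proof (induction A rule: finite_induct)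
  case empty
  then show ?case using sm_zero[OF assms(2)] by (simp add: vzero_def)
next
  case (insert x F)
  have "(\<lambda>i. \<Sum>y\<in>insert x F. \<phi> y i * c y) = vadd (vsmul (\<phi> x) (c x)) (\<lambda>i. \<Sum>y\<in>F. \<phi> y i * c y)"
    using insert(1,2) by (simp add: vadd_def vsmul_def fun_eq_iff)
  then show ?case using insert sm_add[OF assms(2)] sm_smul[OF assms(2)] by simp
qed

lemma lincomb_image:
  assumes "finite C"
  shows "\<exists>c'. (\<lambda>i. \<Sum>x\<in>C. F x i * e x) = lincomb (F ` C) c'"
proof
  show "(\<lambda>i. \<Sum>x\<in>C. F x i * e x) = lincomb (F ` C) (\<lambda>y. \<Sum>x\<in>{x\<in>C. F x = y}. e x)"
  proof
    fix i
    have "(\<Sum>x\<in>C. F x i * e x) = (\<Sum>y\<in>F ` C. \<Sum>x\<in>{x\<in>C. F x = y}. F x i * e x)"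
      by (rule sum.image_gen[OF assms])
    also have "\<dots> = (\<Sum>y\<in>F ` C. y i * (\<Sum>x\<in>{x\<in>C. F x = y}. e x))"
      by (rule sum.cong) (auto simp: sum_distrib_left)
    finally show "(\<Sum>x\<in>C. F x i * e x) = lincomb (F ` C) (\<lambda>y. \<Sum>x\<in>{x\<in>C. F x = y}. e x) i"
      by (simp add: lincomb_def)
  qed
qed

lemma lincomb_reindex:
  assumes "bij_betw h {0..<p} G"
  shows "lincomb G c = vs p h (\<lambda>l. c (h l))"
proof
  fix i
  have "lincomb G c i = (\<Sum>x\<in>G. x i * c x)" by (simp add: lincomb_def)
  also have "\<dots> = (\<Sum>l\<in>{0..<p}. h l i * c (h l))"
    using sum.reindex_bij_betw[OF assms, of "\<lambda>x. x i * c x"] by simp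
  finally show "lincomb G c i = vs p h (\<lambda>l. c (h l)) i" by (simp add: vs_def atLeast0LessThan)
qed

lemma lincomb_mono:
  assumes "finite B" "A \<subseteq> B"
  shows "lincomb A c = lincomb B (\<lambda>x. if x \<in> A then c x else 0)"
proof
  fix i
  have "(\<Sum>x\<in>B. x i * (if x \<in> A then c x else 0)) = (\<Sum>x\<in>B. if x \<in> A then x i * c x else 0)"
    by (rule sum.cong) auto
  also have "\<dots> = (\<Sum>x\<in>B \<inter> A. x i * c x)" by (rule sum.inter_restrict[OF assms(1), symmetric])
  also have "B \<inter> A = A" using assms(2) by blast
  finally show "lincomb A c i = lincomb B (\<lambda>x. if x \<in> A then c x else 0) i"
    by (simp add: lincomb_def)
qed

lemma lincomb_add: "vadd (lincomb A c1) (lincomb A c2) = lincomb A (\<lambda>x. c1 x + c2 x)"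
  by (simp add: lincomb_def vadd_def fun_eq_iff sum.distrib distrib_left)

lemma lincomb_union:
  assumes "finite A" "finite B"
  shows "\<exists>c. vadd (lincomb A c1) (lincomb B c2) = lincomb (A \<union> B) c"
proof -
  have f: "finite (A \<union> B)" using assms by simp
  show ?thesis
    unfolding lincomb_mono[OF f Un_upper1, of c1] lincomb_mono[OF f Un_upper2, of c2] lincomb_add by blast
qed

lemma lincomb_empty[simp]: "lincomb {} c = vzero" by (simp add: lincomb_def vzero_def)



lemma SUB:
  fixes K :: "'a::ring_1 vec set"
  assumes noeth: "noetherian_ring TYPE('a)"
  shows "rsubmod K \<Longrightarrow> K \<subseteq> Fr n \<Longrightarrow> \<exists>G. finite G \<and> G \<subseteq> K \<and> (\<forall>v\<in>K. \<exists>c. v = lincomb G c)"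
proof (induction n arbitrary: K)
  case 0
  have "K \<subseteq> {vzero}" using 0(2) by (auto simp: Fr_def vzero_def)
  then show ?case by (intro exI[of _ "{}"]) auto
next
  case (Suc n)
  note K = Suc.prems(1)
  define I where "I = (\<lambda>v. v n) ` K"
  have "0 \<in> I" using sm_zero[OF K] by (force simp: I_def vzero_def)
  moreover have "\<forall>x\<in>I. \<forall>y\<in>I. x + y \<in> I"
  proof (intro ballI)
    fix x y assume "x \<in> I" "y \<in> I"
    then obtain u v where "u \<in> K" "v \<in> K" "x = u n" "y = v n" by (auto simp: I_def)
    then show "x + y \<in> I" using sm_add[OF K] unfolding I_def
      by (metis (no_types, lifting) image_eqI vadd_def)
  qed
  moreover have "\<forall>x\<in>I. \<forall>a. x * a \<in> I"
  proof (intro ballI allI)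
    fix x a assume "x \<in> I"
    then obtain u where "u \<in> K" "x = u n" by (auto simp: I_def)
    then show "x * a \<in> I" using sm_smul[OF K] unfolding I_def
      by (metis (no_types, lifting) image_eqI vsmul_def)
  qed
  ultimately obtain G0 where G0: "finite G0" "G0 \<subseteq> I" "I = {\<Sum>g\<in>G0. g * c g | c. True}"
    using noeth unfolding noetherian_ring_def by blast
  define w where "w g = (SOME v. v \<in> K \<and> v n = g)" for g
  have w: "w g \<in> K \<and> w g n = g" if "g \<in> G0" for g
  proof -
    have "\<exists>v. v \<in> K \<and> v n = g" using that G0(2) by (auto simp: I_def)
    then show ?thesis unfolding w_def by (rule someI_ex)
  qed
  have K': "rsubmod (K \<inter> Fr n)" by (rule sm_Int[OF K Fr_sm])
  obtain G' where G': "finite G'" "G' \<subseteq> K \<inter> Fr n" "\<forall>v\<in>K \<inter> Fr n. \<exists>c. v = lincomb G' c"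
    using Suc.IH[OF K'] by blast
  have "\<forall>v\<in>K. \<exists>c. v = lincomb (G' \<union> w ` G0) c"
  proof
    fix v assume v: "v \<in> K"
    then have "v n \<in> I" by (simp add: I_def)
    then obtain c where c: "v n = (\<Sum>g\<in>G0. g * c g)" using G0(3) by blast
    define u where "u = (\<lambda>i. \<Sum>g\<in>G0. w g i * c g)"
    have u: "u \<in> K" unfolding u_def by (rule sm_setsum[OF G0(1) K]) (use w in blast)
    have "vsub v u \<in> Fr n"
    proof -
      have "vsub v u i = 0" if "n \<le> i" for i
      proof (cases "i = n")
        case True
        have "u n = (\<Sum>g\<in>G0. g * c g)" unfolding u_def by (rule sum.cong) (use w in auto)
        then show ?thesis using True c by (simp add: vsub_def)
      next
        case False
        then have i: "Suc n \<le> i" using that by simp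
        have "v i = 0" using v Suc.prems(2) i by (auto simp: Fr_def)
        moreover have "u i = 0" unfolding u_def
        proof (rule sum.neutral, rule ballI)
          fix g assume "g \<in> G0"
          then have "w g \<in> Fr (Suc n)" using w Suc.prems(2) by blast
          then show "w g i * c g = 0" using i by (simp add: Fr_def)
        qed
        ultimately show ?thesis by (simp add: vsub_def)
      qed
      then show ?thesis by (simp add: Fr_def)
    qed
    moreover have "vsub v u \<in> K" by (rule sm_sub[OF K v u])
    ultimately obtain c1 where c1: "vsub v u = lincomb G' c1" using G'(3) by blast
    obtain c2 where c2: "u = lincomb (w ` G0) c2" unfolding u_def using lincomb_image[OF G0(1)] by blast
    have "v = vadd (vsub v u) u" by (simp add: vsub_def vadd_def fun_eq_iff)
    then show "\<exists>c. v = lincomb (G' \<union> w ` G0) c"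
      using lincomb_union[OF G'(1) finite_imageI[OF G0(1)]] c1 c2 by metis
  qed
  moreover have "G' \<union> w ` G0 \<subseteq> K" using G'(2) w by blast
  moreover have "finite (G' \<union> w ` G0)" using G'(1) G0(1) by simp
  ultimately show ?case by blast
qed

lemma SUBI:
  fixes K :: "'a::ring_1 vec set"
  assumes noeth: "noetherian_ring TYPE('a)" and K: "rsubmod K" "K \<subseteq> Fr n"
  shows "\<exists>p B. (\<forall>l<p. (\<lambda>k. B k l) \<in> K) \<and> (\<forall>v\<in>K. \<exists>c\<in>Fr p. v = mv n p B c)"
proof -
  obtain G where G: "finite G" "G \<subseteq> K" "\<forall>v\<in>K. \<exists>c. v = lincomb G c"
    using SUB[OF noeth K] by blast
  obtain h where h: "bij_betw h {0..<card G} G" using ex_bij_betw_nat_finite[OF G(1)] by blast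
  define p where "p = card G"
  define B where "B k l = h l k" for k l
  have hG: "h l \<in> G" if "l < p" for l using h that unfolding p_def bij_betw_def by auto
  have cols: "(\<lambda>k. B k l) \<in> K" if "l < p" for l using hG[OF that] G(2) by (auto simp: B_def)
  have "\<exists>c\<in>Fr p. v = mv n p B c" if v: "v \<in> K" for v
  proof -
    obtain c where c: "v = lincomb G c" using G(3) v by blast
    define c' where "c' l = (if l < p then c (h l) else 0)" for l
    have "c' \<in> Fr p" by (simp add: c'_def Fr_def)
    moreover have "v = mv n p B c'"
    proof
      fix k
      have "v k = vs p h (\<lambda>l. c (h l)) k" using lincomb_reindex[OF h] c p_def by simp
      also have "\<dots> = (\<Sum>l<p. B k l * c' l)" by (simp add: vs_def B_def c'_def)
      also have "\<dots> = mv n p B c' k"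
      proof (cases "k < n")
        case True then show ?thesis by (simp add: mv_def)
      next
        case False
        have "B k l = 0" if "l < p" for l using hG[OF that] G(2) K(2) False by (auto simp: B_def Fr_def)
        then show ?thesis using False by (simp add: mv_def)
      qed
      finally show "v k = mv n p B c' k" .
    qed
    ultimately show ?thesis by blast
  qed
  with cols show ?thesis by blast
qed



lemma aug_add: "aug n h (vadd c1 c2) = vadd (aug n h c1) (aug n h c2)"
  by (simp add: aug_def vadd_def fun_eq_iff distrib_left sum.distrib)
lemma aug_smul: "aug n h (vsmul c a) = vsmul (aug n h c) a"
  by (simp add: aug_def vsmul_def fun_eq_iff sum_distrib_right mult.assoc)
lemma aug_zero: "aug n h vzero = vzero"
  by (simp add: aug_def vzero_def fun_eq_iff)
lemma mv_add: "mv n p B (vadd c1 c2) = vadd (mv n p B c1) (mv n p B c2)"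
  by (simp add: mv_def vadd_def fun_eq_iff distrib_left sum.distrib)
lemma mv_smul: "mv n p B (vsmul c a) = vsmul (mv n p B c) a"
  by (simp add: mv_def vsmul_def fun_eq_iff sum_distrib_right mult.assoc)
lemma mv_zero: "mv n p B vzero = vzero"
  by (simp add: mv_def vzero_def fun_eq_iff)

lemma ker_sm: "rsubmod {c \<in> Fr p. mv n p B c = vzero}"
proof -
  have z1: "vadd vzero vzero = (vzero :: 'a vec)" by (simp add: vadd_def vzero_def)
  have z2: "vsmul vzero a = (vzero :: 'a vec)" for a by (simp add: vsmul_def vzero_def)
  show ?thesis
    using Fr_sm[of p] sm_zero[OF Fr_sm[of p]] sm_add[OF Fr_sm[of p]] sm_smul[OF Fr_sm[of p]]
    unfolding rsubmod_def by (auto simp: mv_add mv_smul mv_zero z1 z2)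
qed

lemma mv_vs: "(\<And>l. l < p \<Longrightarrow> (\<lambda>k. B k l) \<in> Fr n) \<Longrightarrow> mv n p B c = vs p (\<lambda>l k. B k l) c"
  by (auto simp: mv_def vs_def fun_eq_iff Fr_def)

lemma mv_in: "rsubmod K \<Longrightarrow> K \<subseteq> Fr n \<Longrightarrow> (\<And>l. l < p \<Longrightarrow> (\<lambda>k. B k l) \<in> K) \<Longrightarrow> mv n p B c \<in> K"
  by (subst mv_vs) (auto intro: sm_vs)

definition gens :: "nat \<Rightarrow> 'a::ring_1 vec set \<Rightarrow> nat \<times> (nat \<Rightarrow> nat \<Rightarrow> 'a)" where
  "gens n K = (SOME pB. (\<forall>l<fst pB. (\<lambda>k. snd pB k l) \<in> K) \<and> (\<forall>v\<in>K. \<exists>c\<in>Fr (fst pB). v = mv n (fst pB) (snd pB) c))"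

lemma gens_prop:
  fixes K :: "'a::ring_1 vec set"
  assumes "noetherian_ring TYPE('a)" "rsubmod K" "K \<subseteq> Fr n"
  shows "(\<forall>l<fst (gens n K). (\<lambda>k. snd (gens n K) k l) \<in> K) \<and>
         (\<forall>v\<in>K. \<exists>c\<in>Fr (fst (gens n K)). v = mv n (fst (gens n K)) (snd (gens n K)) c)"
proof -
  obtain p B where "(\<forall>l<p. (\<lambda>k. B k l) \<in> K) \<and> (\<forall>v\<in>K. \<exists>c\<in>Fr p. v = mv n p B c)"
    using SUBI[OF assms] by blast
  then have "\<exists>pB. (\<forall>l<fst pB. (\<lambda>k. snd pB k l) \<in> K) \<and> (\<forall>v\<in>K. \<exists>c\<in>Fr (fst pB). v = mv n (fst pB) (snd pB) c)"
    by (intro exI[of _ "(p, B)"]) simp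
  then show ?thesis unfolding gens_def by (rule someI_ex)
qed

lemma gens_iff:
  fixes K :: "'a::ring_1 vec set"
  assumes "noetherian_ring TYPE('a)" "rsubmod K" "K \<subseteq> Fr n"
  shows "c \<in> K \<longleftrightarrow> (\<exists>b\<in>Fr (fst (gens n K)). c = mv n (fst (gens n K)) (snd (gens n K)) b)"
  using gens_prop[OF assms] mv_in[OF assms(2,3)] by blast

primrec res_chain :: "nat \<times> 'a::ring_1 vec set \<Rightarrow> nat \<Rightarrow> nat \<times> 'a vec set" where
  "res_chain s 0 = s"
| "res_chain s (Suc i) = (fst (gens (fst (res_chain s i)) (snd (res_chain s i))),
     {c \<in> Fr (fst (gens (fst (res_chain s i)) (snd (res_chain s i)))).
        mv (fst (res_chain s i)) (fst (gens (fst (res_chain s i)) (snd (res_chain s i))))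
           (snd (gens (fst (res_chain s i)) (snd (res_chain s i)))) c = vzero})"

lemma chain_inv:
  assumes "rsubmod (snd s)" "snd s \<subseteq> Fr (fst s)"
  shows "rsubmod (snd (res_chain s i)) \<and> snd (res_chain s i) \<subseteq> Fr (fst (res_chain s i))"
  using assms by (induction i) (auto simp: ker_sm)

lemma RES:
  fixes S :: "'a::ring_1 sq"
  assumes noeth: "noetherian_ring TYPE('a)" and vS: "sq_valid S" and fS: "sq_fg S"
  shows "\<exists>r g D. free_res S r g D"
proof -
  obtain G where G: "finite G" "G \<subseteq> fst S" "\<forall>v\<in>fst S. \<exists>c. vsub v (lincomb G c) \<in> snd S"
    using fS by (auto simp: sq_fg_def)
  obtain h where h: "bij_betw h {0..<card G} G" using ex_bij_betw_nat_finite[OF G(1)] by blast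
  define n where "n = card G"
  have hG: "h l \<in> fst S" if "l < n" for l using h that G(2) unfolding n_def bij_betw_def by auto
  define K0 where "K0 = {c \<in> Fr n. aug n h c \<in> snd S}"
  have KS: "rsubmod (snd S)" using vS valid_snd by blast
  have K0: "rsubmod K0" "K0 \<subseteq> Fr n"
  proof -
    show "K0 \<subseteq> Fr n" by (auto simp: K0_def)
    show "rsubmod K0" using Fr_sm[of n] sm_zero[OF KS] sm_add[OF KS] sm_smul[OF KS] unfolding rsubmod_def K0_def
      by (auto simp: aug_add aug_smul aug_zero)
  qed
  define s where "s = (n, K0)"
  define r where "r i = fst (res_chain s i)" for i
  define Ks where "Ks i = snd (res_chain s i)" for i
  define D where "D i = snd (gens (r i) (Ks i))" for i
  have inv: "rsubmod (Ks i)" "Ks i \<subseteq> Fr (r i)" for i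
    using chain_inv[of s i] K0 unfolding s_def Ks_def r_def by auto
  have rS: "r (Suc i) = fst (gens (r i) (Ks i))" for i by (simp add: r_def Ks_def)
  have KSuc: "Ks (Suc i) = {c \<in> Fr (r (Suc i)). mv (r i) (r (Suc i)) (D i) c = vzero}" for i
    by (simp add: r_def Ks_def D_def)
  have r0: "r 0 = n" "Ks 0 = K0" by (simp_all add: r_def Ks_def s_def)
  have gi: "c \<in> Ks i \<longleftrightarrow> (\<exists>b\<in>Fr (r (Suc i)). c = mv (r i) (r (Suc i)) (D i) b)" for i c
    unfolding rS D_def by (rule gens_iff[OF noeth inv])
  have "free_res S r h D"
    unfolding free_res_def
  proof (intro conjI)
    show "\<forall>k<r 0. h k \<in> fst S" using hG r0 by simp
  next
    show "\<forall>v\<in>fst S. \<exists>c\<in>Fr (r 0). vsub v (aug (r 0) h c) \<in> snd S"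
    proof
    fix v assume v: "v \<in> fst S"
    obtain c where c: "vsub v (lincomb G c) \<in> snd S" using G(3) v by blast
    define c' where "c' l = (if l < n then c (h l) else 0)" for l
    have "lincomb G c = aug n h c'"
      unfolding lincomb_reindex[OF h] aug_vs n_def[symmetric] by (rule vs_cong) (auto simp: c'_def)
    moreover have "c' \<in> Fr n" by (simp add: c'_def Fr_def)
    ultimately show "\<exists>c\<in>Fr (r 0). vsub v (aug (r 0) h c) \<in> snd S" using c r0 by auto
    qed
  next
    show "\<forall>c\<in>Fr (r 0). aug (r 0) h c \<in> snd S \<longleftrightarrow> (\<exists>b\<in>Fr (r 1). c = mv (r 0) (r 1) (D 0) b)"
    proof
    fix c :: "'a vec" assume "c \<in> Fr (r 0)"
    then have "aug (r 0) h c \<in> snd S \<longleftrightarrow> c \<in> Ks 0" using r0 by (simp add: K0_def)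
    then show "aug (r 0) h c \<in> snd S \<longleftrightarrow> (\<exists>b\<in>Fr (r 1). c = mv (r 0) (r 1) (D 0) b)"
      using gi[of c 0] by simp
    qed
  next
    show "\<forall>i. \<forall>c\<in>Fr (r (Suc i)). mv (r i) (r (Suc i)) (D i) c = vzero \<longleftrightarrow>
          (\<exists>b\<in>Fr (r (Suc (Suc i))). c = mv (r (Suc i)) (r (Suc (Suc i))) (D (Suc i)) b)"
    proof (intro allI ballI)
    fix i and c :: "'a vec" assume "c \<in> Fr (r (Suc i))"
    then have "mv (r i) (r (Suc i)) (D i) c = vzero \<longleftrightarrow> c \<in> Ks (Suc i)" using KSuc by simp
    then show "mv (r i) (r (Suc i)) (D i) c = vzero \<longleftrightarrow>
          (\<exists>b\<in>Fr (r (Suc (Suc i))). c = mv (r (Suc i)) (r (Suc (Suc i))) (D (Suc i)) b)"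
      using gi[of c "Suc i"] by simp
    qed
  qed
  then show ?thesis by blast
qed



lemma aug_lincomb: "aug n h (lincomb C e) = (\<lambda>i. \<Sum>x\<in>C. aug n h x i * e x)"
  by (simp add: aug_def lincomb_def fun_eq_iff sum_distrib_left sum_distrib_right mult.assoc sum.swap[of _ "{..<n}"])

lemma fg_cohom:
  fixes X :: "nat \<Rightarrow> 'a::ring_1 sq"
  assumes noeth: "noetherian_ring TYPE('a)" and X: "is_complex X f"
  shows "sq_fg (cohom X f m)"
proof -
  obtain G where G: "finite G" "G \<subseteq> fst (X m)" "\<forall>v\<in>fst (X m). \<exists>c. vsub v (lincomb G c) \<in> snd (X m)"
    using cx_fg[OF X, of m] by (auto simp: sq_fg_def)
  obtain h where h: "bij_betw h {0..<card G} G" using ex_bij_betw_nat_finite[OF G(1)] by blast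
  define n where "n = card G"
  have hG: "h l \<in> fst (X m)" if "l < n" for l using h that G(2) unfolding n_def bij_betw_def by auto
  define K where "K = {c \<in> Fr n. aug n h c \<in> cocycles X f m}"
  have KS: "rsubmod (cocycles X f m)" by (rule cocycles_sm[OF X])
  have K: "rsubmod K" "K \<subseteq> Fr n"
  proof -
    show "K \<subseteq> Fr n" by (auto simp: K_def)
    show "rsubmod K" using Fr_sm[of n] sm_zero[OF KS] sm_add[OF KS] sm_smul[OF KS] unfolding rsubmod_def K_def
      by (auto simp: aug_add aug_smul aug_zero)
  qed
  obtain C where C: "finite C" "C \<subseteq> K" "\<forall>v\<in>K. \<exists>e. v = lincomb C e" using SUB[OF noeth K] by blast
  have sc: "snd (X m) \<subseteq> cocycles X f m" using snd_sub_cob[OF X] cob_sub_coc[OF X] by blast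
  have sb: "snd (X m) \<subseteq> coboundaries X f m" using snd_sub_cob[OF X] by blast
  have "\<exists>e. vsub v (lincomb (aug n h ` C) e) \<in> coboundaries X f m" if v: "v \<in> cocycles X f m" for v
  proof -
    have vf: "v \<in> fst (X m)" using v by (simp add: cocycles_def)
    obtain c where c: "vsub v (lincomb G c) \<in> snd (X m)" using G(3) vf by blast
    define c' where "c' l = (if l < n then c (h l) else 0)" for l
    have lc: "lincomb G c = aug n h c'"
      unfolding lincomb_reindex[OF h] aug_vs n_def[symmetric] by (rule vs_cong) (auto simp: c'_def)
    have "eqm (cocycles X f m) (aug n h c') v"
      using c lc sc eqm_sym[OF KS] unfolding eqm_def by auto
    then have "aug n h c' \<in> cocycles X f m" using eqm_in[OF KS] v by blast
    moreover have "c' \<in> Fr n" by (simp add: c'_def Fr_def)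
    ultimately have "c' \<in> K" by (simp add: K_def)
    then obtain e where "c' = lincomb C e" using C(3) by blast
    then have "aug n h c' = (\<lambda>i. \<Sum>x\<in>C. aug n h x i * e x)" by (simp add: aug_lincomb)
    moreover obtain e' where "(\<lambda>i. \<Sum>x\<in>C. aug n h x i * e x) = lincomb (aug n h ` C) e'"
      using lincomb_image[OF C(1), of "aug n h" e] by blast
    ultimately have "lincomb G c = lincomb (aug n h ` C) e'" using lc by simp
    then have "vsub v (lincomb (aug n h ` C) e') \<in> coboundaries X f m" using c sb by auto
    then show ?thesis by blast
  qed
  moreover have "aug n h ` C \<subseteq> cocycles X f m" using C(2) K_def by auto
  moreover have "finite (aug n h ` C)" using C(1) by simp
  ultimately show ?thesis unfolding sq_fg_def cohom_def by auto
qed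

lemma dep_le: "sq_valid S \<Longrightarrow> sq_fg S \<Longrightarrow> Dm S \<le> 0 \<Longrightarrow> Ext_nz i S M \<Longrightarrow> dep Dm M \<le> enat i"
  unfolding dep_def by (rule INF_lower) blast

lemma not_ext:
  assumes "free_res S r g D" "\<forall>k<r i. \<phi> k \<in> fst M" "\<forall>j<r (Suc i). codiff (r i) (D i) \<phi> j \<in> snd M"
    "\<not> Ext_nz i S M"
  shows "(case i of 0 \<Rightarrow> (\<forall>k<r 0. \<phi> k \<in> snd M)
             | Suc i' \<Rightarrow> (\<exists>\<psi>. (\<forall>k<r i'. \<psi> k \<in> fst M)
                  \<and> (\<forall>k<r i. vsub (\<phi> k) (codiff (r i') (D i') \<psi> k) \<in> snd M)))"
  using assms unfolding Ext_nz_def by blast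

lemma hl_sub:
  assumes h: "hom_lift M M' \<phi>" and vM: "sq_valid M" and vM': "sq_valid M'"
    and u: "u \<in> fst M" and v: "v \<in> fst M"
  shows "eqm (snd M') (\<phi> (vsub u v)) (vsub (\<phi> u) (\<phi> v))"
proof -
  have K: "rsubmod (snd M')" using vM' valid_snd by blast
  have v': "vsmul v (-1) \<in> fst M" using sm_smul[OF valid_fst[OF vM] v] .
  have "eqm (snd M') (\<phi> (vadd u (vsmul v (-1)))) (vadd (\<phi> u) (\<phi> (vsmul v (-1))))"
    by (rule hl_add[OF h u v'])
  moreover have "eqm (snd M') (vadd (\<phi> u) (\<phi> (vsmul v (-1)))) (vadd (\<phi> u) (vsmul (\<phi> v) (-1)))"
    by (rule eqm_add[OF K eqm_refl[OF K] hl_smul[OF h v]])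
  ultimately show ?thesis unfolding vsub_as using eqm_trans[OF K] by blast
qed



lemma main_step:
  fixes X :: "nat \<Rightarrow> 'a::ring_1 sq" and Dm :: "'a sq \<Rightarrow> ereal"
  assumes noeth: "noetherian_ring TYPE('a)" and X: "is_complex X f"
    and depth: "\<forall>i. enat (d - i) \<le> dep Dm (X i)"
    and hD: "\<forall>i. Dm (cohom X f i) \<le> 0"
    and md: "m < d" and low: "\<forall>j<m. sq_zero (cohom X f j)"
  shows "sq_zero (cohom X f m)"
proof (rule ccontr)
  assume nz: "\<not> sq_zero (cohom X f m)"
  define S where "S = cohom X f m"
  have vS: "sq_valid S" unfolding S_def by (rule cohom_valid[OF X])
  have fS: "sq_fg S" unfolding S_def by (rule fg_cohom[OF noeth X])
  obtain r g D where fr: "free_res S r g D" using RES[OF noeth vS fS] by blast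
  have noExt: "\<not> Ext_nz t S (X i)" if "t < d - i" for t i
  proof
    assume "Ext_nz t S (X i)"
    then have "dep Dm (X i) \<le> enat t" using dep_le[OF vS fS] hD S_def by blast
    then have "enat (d - i) \<le> enat t" using depth order_trans by blast
    then show False using that by simp
  qed
  have lowz: "cocycles X f j = coboundaries X f j" if "j < m" for j
    using low that by (simp add: sq_zero_def cohom_def)
  have fstS: "fst S = cocycles X f m" and sndS: "snd S = coboundaries X f m" by (simp_all add: S_def cohom_def)
  have Fi: "rsubmod (fst (X i))" and Ki: "rsubmod (snd (X i))" and Vi: "sq_valid (X i)"
    and Hi: "hom_lift (X i) (X (Suc i)) (f i)" for i
    using cx_valid[OF X] valid_fst valid_snd cx_hl[OF X] by blast+

  have W: "vs (r (Suc t')) \<beta> (\<lambda>k. D (Suc t') k j) \<in> cocycles X f i"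
    if b1: "\<And>k. k < r (Suc t') \<Longrightarrow> \<beta> k \<in> fst (X i)"
      and b2: "\<And>k. k < r (Suc t') \<Longrightarrow> eqm (snd (X (Suc i))) (f i (\<beta> k)) (vs (r t') a (\<lambda>l. D t' l k))"
      and j: "j < r (Suc (Suc t'))" for t' \<beta> a i j
  proof -
    let ?w = "vs (r (Suc t')) \<beta> (\<lambda>k. D (Suc t') k j)"
    have w: "?w \<in> fst (X i)" by (rule sm_vs[OF Fi b1])
    have "eqm (snd (X (Suc i))) (f i ?w) (vs (r (Suc t')) (\<lambda>k. f i (\<beta> k)) (\<lambda>k. D (Suc t') k j))"
      by (rule hl_vs[OF Hi Vi Vi b1])
    moreover have "eqm (snd (X (Suc i))) (vs (r (Suc t')) (\<lambda>k. f i (\<beta> k)) (\<lambda>k. D (Suc t') k j))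
        (vs (r (Suc t')) (\<lambda>k. vs (r t') a (\<lambda>l. D t' l k)) (\<lambda>k. D (Suc t') k j))"
      by (rule vs_eqm[OF Ki b2])
    moreover have "vs (r (Suc t')) (\<lambda>k. vs (r t') a (\<lambda>l. D t' l k)) (\<lambda>k. D (Suc t') k j) = vzero"
      unfolding vs_vs by (rule vs_zero_coeff) (rule fr2[OF fr _ j])
    ultimately have "f i ?w \<in> snd (X (Suc i))" using eqm_trans[OF Ki] eqm_zero by metis
    then show ?thesis using w by (simp add: cocycles_def)
  qed

  define alpha where "alpha = rec_nat g (\<lambda>t a. \<lambda>j. SOME u. u \<in> fst (X (m - Suc t)) \<and>
      eqm (snd (X (m - t))) (f (m - Suc t) u) (vs (r t) a (\<lambda>k. D t k j)))"
  have a0: "alpha 0 = g" by (simp add: alpha_def)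
  have aS: "alpha (Suc t) = (\<lambda>j. SOME u. u \<in> fst (X (m - Suc t)) \<and>
      eqm (snd (X (m - t))) (f (m - Suc t) u) (vs (r t) (alpha t) (\<lambda>k. D t k j)))" for t
    by (simp add: alpha_def)

  have L: "t \<le> m \<Longrightarrow> (\<forall>k<r t. alpha t k \<in> fst (X (m - t))) \<and>
     (\<forall>t'. t = Suc t' \<longrightarrow> (\<forall>k<r t. eqm (snd (X (Suc (m - t)))) (f (m - t) (alpha t k)) (vs (r t') (alpha t') (\<lambda>l. D t' l k))))"
    for t
  proof (induction t)
    case 0
    have "g k \<in> fst (X m)" if "k < r 0" for k
      using fr_gen[OF fr that] fstS by (simp add: cocycles_def)
    then show ?case by (simp add: a0)
  next
    case (Suc t)
    have tm: "t < m" using Suc.prems by simp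
    have IH: "\<forall>k<r t. alpha t k \<in> fst (X (m - t))"
      "\<forall>t'. t = Suc t' \<longrightarrow> (\<forall>k<r t. eqm (snd (X (Suc (m - t)))) (f (m - t) (alpha t k)) (vs (r t') (alpha t') (\<lambda>l. D t' l k)))"
      using Suc.IH tm by auto
    define i where "i = m - Suc t"
    have mi: "m - t = Suc i" using tm by (simp add: i_def)
    have ex: "\<exists>u. u \<in> fst (X i) \<and> eqm (snd (X (Suc i))) (f i u) (vs (r t) (alpha t) (\<lambda>k. D t k j))"
      if j: "j < r (Suc t)" for j
    proof -
      have "vs (r t) (alpha t) (\<lambda>k. D t k j) \<in> coboundaries X f (Suc i)"
      proof (cases t)
        case 0
        then show ?thesis using fr1[OF fr] j mi sndS a0 by simp
      next
        case (Suc t'')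
        have "vs (r t) (alpha t) (\<lambda>k. D t k j) \<in> cocycles X f (m - t)"
          unfolding Suc
          by (rule W) (use IH Suc j in \<open>auto simp: mi\<close>)
        moreover have "m - t < m" using Suc tm by simp
        ultimately show ?thesis using lowz mi by simp
      qed
      then obtain u where "u \<in> fst (X i)" "eqm (snd (X (Suc i))) (vs (r t) (alpha t) (\<lambda>k. D t k j)) (f i u)"
        using cob_Suc_iff[OF X] by blast
      then show ?thesis using eqm_sym[OF Ki] by blast
    qed
    have "alpha (Suc t) j \<in> fst (X i) \<and> eqm (snd (X (Suc i))) (f i (alpha (Suc t) j)) (vs (r t) (alpha t) (\<lambda>k. D t k j))"
      if "j < r (Suc t)" for j
      unfolding aS i_def[symmetric] mi[symmetric] using someI_ex[OF ex[OF that]] by (simp add: mi)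
    then show ?case using mi by (simp add: i_def)
  qed

  define P where "P t \<longleftrightarrow> (\<exists>\<beta>. (\<forall>k<r t. \<beta> k \<in> fst (X (m - t)))
     \<and> (t = 0 \<longrightarrow> (\<forall>k<r 0. eqm (coboundaries X f m) (\<beta> k) (g k)))
     \<and> (\<forall>t'. t = Suc t' \<longrightarrow> (\<forall>k<r t. eqm (snd (X (Suc (m - t)))) (f (m - t) (\<beta> k)) (vs (r t') (alpha t') (\<lambda>l. D t' l k))))
     \<and> (\<forall>j<r (Suc t). vs (r t) \<beta> (\<lambda>k. D t k j) \<in> snd (X (m - t))))" for t

  have Pm: "P m"
  proof -
    have Lm: "\<forall>k<r m. alpha m k \<in> fst (X (m - m))"
      "\<forall>t'. m = Suc t' \<longrightarrow> (\<forall>k<r m. eqm (snd (X (Suc (m - m)))) (f (m - m) (alpha m k)) (vs (r t') (alpha t') (\<lambda>l. D t' l k)))"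
      using L[of m] by auto
    have cyc: "\<forall>j<r (Suc m). vs (r m) (alpha m) (\<lambda>k. D m k j) \<in> snd (X (m - m))"
    proof (cases m)
      case 0
      then show ?thesis using fr1[OF fr] sndS a0 by (simp add: coboundaries_def)
    next
      case (Suc m')
      have "vs (r m) (alpha m) (\<lambda>k. D m k j) \<in> cocycles X f 0" if "j < r (Suc m)" for j
        unfolding Suc by (rule W) (use Lm Suc that in auto)
      moreover have "cocycles X f 0 = snd (X 0)" using lowz[of 0] Suc by (simp add: coboundaries_def)
      ultimately show ?thesis by simp
    qed
    have "m = 0 \<longrightarrow> (\<forall>k<r 0. eqm (coboundaries X f m) (alpha m k) (g k))"
      using eqm_refl[OF coboundaries_sm[OF X]] a0 by auto
    then show ?thesis unfolding P_def using Lm cyc by blast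
  qed

  have step: "P t" if tm: "t < m" and PS: "P (Suc t)" for t
  proof -
    define i where "i = m - Suc t"
    have mi: "m - t = Suc i" using tm by (simp add: i_def)
    obtain \<beta> where b1: "\<forall>k<r (Suc t). \<beta> k \<in> fst (X i)"
      and b2: "\<forall>k<r (Suc t). eqm (snd (X (Suc i))) (f i (\<beta> k)) (vs (r t) (alpha t) (\<lambda>l. D t l k))"
      and b3: "\<forall>j<r (Suc (Suc t)). vs (r (Suc t)) \<beta> (\<lambda>k. D (Suc t) k j) \<in> snd (X i)"
      using PS unfolding P_def i_def by auto
    have "Suc t < d - i" using tm md by (simp add: i_def)
    then have ne: "\<not> Ext_nz (Suc t) S (X i)" by (rule noExt)
    obtain \<psi> where p1: "\<forall>k<r t. \<psi> k \<in> fst (X i)"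
      and p2: "\<forall>k<r (Suc t). vsub (\<beta> k) (codiff (r t) (D t) \<psi> k) \<in> snd (X i)"
      using not_ext[OF fr b1 _ ne] b3 by (auto simp: codiff_vs)
    have Lt: "\<forall>k<r t. alpha t k \<in> fst (X (Suc i))"
      "\<forall>t'. t = Suc t' \<longrightarrow> (\<forall>k<r t. eqm (snd (X (Suc (Suc i)))) (f (Suc i) (alpha t k)) (vs (r t') (alpha t') (\<lambda>l. D t' l k)))"
      using L[of t] tm mi by auto
    define \<gamma> where "\<gamma> k = vsub (alpha t k) (f i (\<psi> k))" for k
    have g1: "\<forall>k<r t. \<gamma> k \<in> fst (X (Suc i))"
      using Lt(1) p1 hl_fst[OF Hi] sm_sub[OF Fi] by (simp add: \<gamma>_def)
    have g2: "t = 0 \<longrightarrow> (\<forall>k<r 0. eqm (coboundaries X f m) (\<gamma> k) (g k))"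
    proof (intro impI allI impI)
      fix k assume t0: "t = 0" and k: "k < r 0"
      have "f i (\<psi> k) \<in> coboundaries X f (Suc i)"
        using cob_Suc_iff[OF X] p1 k t0 eqm_refl[OF Ki] by blast
      then have "vsmul (f i (\<psi> k)) (-1) \<in> coboundaries X f m"
        using sm_smul[OF coboundaries_sm[OF X]] mi t0 by simp
      moreover have "vsub (\<gamma> k) (g k) = vsmul (f i (\<psi> k)) (-1)"
        using t0 a0 by (simp add: \<gamma>_def vsub_def vsmul_def fun_eq_iff)
      ultimately show "eqm (coboundaries X f m) (\<gamma> k) (g k)" by (simp add: eqm_def)
    qed
    have g3: "\<forall>t'. t = Suc t' \<longrightarrow> (\<forall>k<r t. eqm (snd (X (Suc (Suc i)))) (f (Suc i) (\<gamma> k)) (vs (r t') (alpha t') (\<lambda>l. D t' l k)))"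
    proof (intro allI impI)
      fix t' k assume tt: "t = Suc t'" and k: "k < r t"
      have A: "alpha t k \<in> fst (X (Suc i))" using Lt(1) k by blast
      have B: "f i (\<psi> k) \<in> fst (X (Suc i))" using p1 k hl_fst[OF Hi] by blast
      have "eqm (snd (X (Suc (Suc i)))) (f (Suc i) (\<gamma> k)) (vsub (f (Suc i) (alpha t k)) (f (Suc i) (f i (\<psi> k))))"
        unfolding \<gamma>_def by (rule hl_sub[OF Hi Vi Vi A B])
      moreover have "eqm (snd (X (Suc (Suc i)))) (vsub (f (Suc i) (alpha t k)) (f (Suc i) (f i (\<psi> k))))
          (vsub (vs (r t') (alpha t') (\<lambda>l. D t' l k)) vzero)"
        apply (rule eqm_subv[OF Ki])
        using Lt(2) tt k apply blast
        using cx_comp[OF X] p1 k eqm_zero by blast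
      moreover have "vsub x vzero = x" for x :: "'a vec" by (simp add: vsub_def vzero_def)
      ultimately show "eqm (snd (X (Suc (Suc i)))) (f (Suc i) (\<gamma> k)) (vs (r t') (alpha t') (\<lambda>l. D t' l k))"
        using eqm_trans[OF Ki] by metis
    qed
    have g4: "\<forall>j<r (Suc t). vs (r t) \<gamma> (\<lambda>k. D t k j) \<in> snd (X (Suc i))"
    proof (intro allI impI)
      fix j assume j: "j < r (Suc t)"
      let ?c = "\<lambda>k. D t k j"
      have e1: "eqm (snd (X (Suc i))) (vs (r t) (alpha t) ?c) (f i (\<beta> j))"
        using b2 j eqm_sym[OF Ki] by blast
      have e2: "eqm (snd (X i)) (vs (r t) \<psi> ?c) (\<beta> j)"
        using p2 j eqm_sym[OF Ki] by (auto simp: eqm_def codiff_vs)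
      have vf: "vs (r t) \<psi> ?c \<in> fst (X i)" using sm_vs[OF Fi] p1 by blast
      have e3: "eqm (snd (X (Suc i))) (f i (vs (r t) \<psi> ?c)) (f i (\<beta> j))"
        by (rule hl_eqm[OF Hi Vi Vi vf _ e2]) (use b1 j in blast)
      have e4: "eqm (snd (X (Suc i))) (f i (vs (r t) \<psi> ?c)) (vs (r t) (\<lambda>k. f i (\<psi> k)) ?c)"
        by (rule hl_vs[OF Hi Vi Vi]) (use p1 in blast)
      have "eqm (snd (X (Suc i))) (vs (r t) (alpha t) ?c) (vs (r t) (\<lambda>k. f i (\<psi> k)) ?c)"
        using e1 e3 e4 eqm_trans[OF Ki] eqm_sym[OF Ki] by metis
      then show "vs (r t) \<gamma> ?c \<in> snd (X (Suc i))"
        unfolding \<gamma>_def vs_sub eqm_def .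
    qed
    show "P t" unfolding P_def mi using g1 g2 g3 g4 by blast
  qed

  have P0: "\<not> P 0"
  proof
    assume "P 0"
    then obtain \<beta> where b1: "\<forall>k<r 0. \<beta> k \<in> fst (X m)"
      and b2: "\<forall>k<r 0. eqm (coboundaries X f m) (\<beta> k) (g k)"
      and b3: "\<forall>j<r (Suc 0). vs (r 0) \<beta> (\<lambda>k. D 0 k j) \<in> snd (X m)"
      unfolding P_def by auto
    have "0 < d - m" using md by simp
    then have ne: "\<not> Ext_nz 0 S (X m)" by (rule noExt)
    have "\<forall>k<r 0. \<beta> k \<in> snd (X m)"
      using not_ext[OF fr b1 _ ne] b3 by (auto simp: codiff_vs)
    then have gc: "\<forall>k<r 0. g k \<in> coboundaries X f m"
      using b2 snd_sub_cob[OF X] eqm_in[OF coboundaries_sm[OF X]] eqm_sym[OF coboundaries_sm[OF X]] by blast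
    have "cocycles X f m \<subseteq> coboundaries X f m"
    proof
      fix v assume vv: "v \<in> cocycles X f m"
      have "\<exists>c\<in>Fr (r 0). vsub v (aug (r 0) g c) \<in> coboundaries X f m"
        using fr_span[OF fr, of v] vv fstS sndS by simp
      then obtain c where "vsub v (aug (r 0) g c) \<in> coboundaries X f m" by blast
      moreover have "aug (r 0) g c \<in> coboundaries X f m"
        unfolding aug_vs using sm_vs[OF coboundaries_sm[OF X]] gc by blast
      ultimately show "v \<in> coboundaries X f m" using eqm_in[OF coboundaries_sm[OF X]] eqm_def by blast
    qed
    then show False using nz cob_sub_coc[OF X] by (auto simp: sq_zero_def cohom_def)
  qed

  have "t \<le> m \<Longrightarrow> \<not> P t" for t
  proof (induction t)
    case 0 show ?case by (rule P0)
  next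
    case (Suc t) then show ?case using step by auto
  qed
  then show False using Pm by blast
qed


theorem proposition5p10:
  fixes \<iota> :: "'k::field \<Rightarrow> 'a::ring_1"
    and Dm :: "'a sq \<Rightarrow> ereal"
    and X :: "nat \<Rightarrow> 'a sq"
    and f :: "nat \<Rightarrow> 'a vec \<Rightarrow> 'a vec"
    and d :: nat
  assumes "algebra_over \<iota>"
    and "noetherian_ring TYPE('a)"
    and "dimfun Dm"
    and "0 < d"
    and "is_complex X f"
    and "\<forall>i. enat (d - i) \<le> dep Dm (X i)"
    and "\<forall>i\<ge>d. sq_zero (cohom X f i)"
    and "\<forall>i. Dm (cohom X f i) \<le> 0"
  shows "\<forall>i. sq_zero (cohom X f i)"
proof -
  have "sq_zero (cohom X f i)" for i
  proof (induction i rule: less_induct)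
    case (less i)
    show ?case
    proof (cases "d \<le> i")
      case True
      then show ?thesis using assms(7) by blast
    next
      case False
      then have "i < d" by simp
      moreover have "\<forall>j<i. sq_zero (cohom X f j)" using less.IH by blast
      ultimately show ?thesis using main_step[OF assms(2) assms(5) assms(6) assms(8)] by blast
    qed
  qed
  then show ?thesis by blast
qed

end
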